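(* Let $U$ be a finite nonempty set, let $(T,I,N)$ be an IMTL triplet, let $\widetilde{R}$ be a $T$-preorder relation on $U$, and let $A$ be a fuzzy set on $U$. Then $A$ is granularly representable with respect to $\widetilde{R}$ if and only if for all $u,v\in U$ the granules $\widetilde{R}^+_{A(u)}(u)$ and $\widetilde{R}^-_{N(A(v))}(v)$ are $T$-disjoint.
   Context: A residual triplet $(T,I,N)$ consists of a left-continuous $t$-norm $T$, its residual implicator $I(x,y)=\sup\{\beta\in[0,1]: T(x,\beta)\le y\}$, and the induced negator $N(x)=I(x,0)$; it is an IMTL triplet if $N$ is involutive ($N(N(x))=x$ for all $x$). A fuzzy set on $U$ is a map $U\to[0,1]$; its complement is $coA(u)=N(A(u))$. A fuzzy relation $\widetilde{R}:U\times U\to[0,1]$ is a $T$-preorder if it is reflexive and $T$-transitive ($T(\widetilde{R}(u,v),\widetilde{R}(v,w))\le\widetilde{R}(u,w)$). Granules: $\widetilde{R}^+_\lambda(u)$ is the fuzzy set $w\mapsto T(\widetilde{R}(w,u),\lambda)$ and $\widetilde{R}^-_\lambda(u)$ is the fuzzy set $w\mapsto T(\widetilde{R}(u,w),\lambda)$. Two fuzzy sets $B,C$ are $T$-disjoint if $T(B(w),C(w))=0$ for all $w\in U$. A fuzzy set $A$ is granularly representable w.r.t. $\widetilde{R}$ if $T(\widetilde{R}(v,u),A(u))\le A(v)$ for all $u,v\in U$ (equivalently, $A(v)=\max_{u\in U}T(\widetilde{R}(v,u),A(u))$ for all $v$). *)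

theory Defs
  imports Complex_Main
begin

text \<open>Fuzzy truth values are reals in [0,1]; binary operations are functions
real \<Rightarrow> real \<Rightarrow> real, whose behaviour outside [0,1] is irrelevant.\<close>

definition tnorm :: "(real \<Rightarrow> real \<Rightarrow> real) \<Rightarrow> bool" where
  "tnorm T \<longleftrightarrow>
     (\<forall>x\<in>{0..1}. \<forall>y\<in>{0..1}. T x y \<in> {0..1}) \<and>
     (\<forall>x\<in>{0..1}. \<forall>y\<in>{0..1}. T x y = T y x) \<and>
     (\<forall>x\<in>{0..1}. \<forall>y\<in>{0..1}. \<forall>z\<in>{0..1}. T (T x y) z = T x (T y z)) \<and>
     (\<forall>x\<in>{0..1}. \<forall>y\<in>{0..1}. \<forall>z\<in>{0..1}. y \<le> z \<longrightarrow> T x y \<le> T x z) \<and>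
     (\<forall>x\<in>{0..1}. T x 1 = x)"

text \<open>Left-continuity (in the first argument; equivalent to both by commutativity).\<close>
definition left_continuous_tnorm :: "(real \<Rightarrow> real \<Rightarrow> real) \<Rightarrow> bool" where
  "left_continuous_tnorm T \<longleftrightarrow> tnorm T \<and>
     (\<forall>y\<in>{0..1}. \<forall>x\<in>{0<..1}. ((\<lambda>z. T z y) \<longlongrightarrow> T x y) (at_left x))"

definition residual_implicator :: "(real \<Rightarrow> real \<Rightarrow> real) \<Rightarrow> real \<Rightarrow> real \<Rightarrow> real" where
  "residual_implicator T x y = Sup {\<beta>\<in>{0..1}. T x \<beta> \<le> y}"

definition induced_negator :: "(real \<Rightarrow> real \<Rightarrow> real) \<Rightarrow> real \<Rightarrow> real" where
  "induced_negator T x = residual_implicator T x 0"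

definition IMTL_triplet ::
  "(real \<Rightarrow> real \<Rightarrow> real) \<Rightarrow> (real \<Rightarrow> real \<Rightarrow> real) \<Rightarrow> (real \<Rightarrow> real) \<Rightarrow> bool" where
  "IMTL_triplet T I N \<longleftrightarrow> left_continuous_tnorm T \<and>
     I = residual_implicator T \<and> N = induced_negator T \<and>
     (\<forall>x\<in>{0..1}. N (N x) = x)"

definition fuzzy_set_on :: "'a set \<Rightarrow> ('a \<Rightarrow> real) \<Rightarrow> bool" where
  "fuzzy_set_on U A \<longleftrightarrow> (\<forall>u\<in>U. A u \<in> {0..1})"

definition fuzzy_relation_on :: "'a set \<Rightarrow> ('a \<Rightarrow> 'a \<Rightarrow> real) \<Rightarrow> bool" where
  "fuzzy_relation_on U R \<longleftrightarrow> (\<forall>u\<in>U. \<forall>v\<in>U. R u v \<in> {0..1})"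

definition T_preorder :: "(real \<Rightarrow> real \<Rightarrow> real) \<Rightarrow> 'a set \<Rightarrow> ('a \<Rightarrow> 'a \<Rightarrow> real) \<Rightarrow> bool" where
  "T_preorder T U R \<longleftrightarrow> fuzzy_relation_on U R \<and>
     (\<forall>u\<in>U. R u u = 1) \<and>
     (\<forall>u\<in>U. \<forall>v\<in>U. \<forall>w\<in>U. T (R u v) (R v w) \<le> R u w)"

definition granule_plus :: "(real \<Rightarrow> real \<Rightarrow> real) \<Rightarrow> ('a \<Rightarrow> 'a \<Rightarrow> real) \<Rightarrow> real \<Rightarrow> 'a \<Rightarrow> 'a \<Rightarrow> real" where
  "granule_plus T R l u = (\<lambda>w. T (R w u) l)"

definition granule_minus :: "(real \<Rightarrow> real \<Rightarrow> real) \<Rightarrow> ('a \<Rightarrow> 'a \<Rightarrow> real) \<Rightarrow> real \<Rightarrow> 'a \<Rightarrow> 'a \<Rightarrow> real" where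
  "granule_minus T R l u = (\<lambda>w. T (R u w) l)"

definition T_disjoint :: "(real \<Rightarrow> real \<Rightarrow> real) \<Rightarrow> 'a set \<Rightarrow> ('a \<Rightarrow> real) \<Rightarrow> ('a \<Rightarrow> real) \<Rightarrow> bool" where
  "T_disjoint T U B C \<longleftrightarrow> (\<forall>w\<in>U. T (B w) (C w) = 0)"

definition granularly_representable ::
  "(real \<Rightarrow> real \<Rightarrow> real) \<Rightarrow> 'a set \<Rightarrow> ('a \<Rightarrow> 'a \<Rightarrow> real) \<Rightarrow> ('a \<Rightarrow> real) \<Rightarrow> bool" where
  "granularly_representable T U R A \<longleftrightarrow> (\<forall>u\<in>U. \<forall>v\<in>U. T (R v u) (A u) \<le> A v)"

end

theory Submission
  imports Defs
begin

lemma tcomm: "tnorm T \<Longrightarrow> x \<in> {0..1} \<Longrightarrow> y \<in> {0..1} \<Longrightarrow> T x y = T y x"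
  unfolding tnorm_def by (elim conjE) (drule bspec, assumption, drule bspec, assumption, assumption)
lemma tassoc: "tnorm T \<Longrightarrow> x \<in> {0..1} \<Longrightarrow> y \<in> {0..1} \<Longrightarrow> z \<in> {0..1} \<Longrightarrow> T (T x y) z = T x (T y z)"
  unfolding tnorm_def by (elim conjE) (drule bspec, assumption, drule bspec, assumption, drule bspec, assumption, assumption)
lemma tmono: "tnorm T \<Longrightarrow> x \<in> {0..1} \<Longrightarrow> y \<in> {0..1} \<Longrightarrow> z \<in> {0..1} \<Longrightarrow> y \<le> z \<Longrightarrow> T x y \<le> T x z"
  unfolding tnorm_def by (elim conjE) (drule bspec, assumption, drule bspec, assumption, drule bspec, assumption, erule mp, assumption)
lemma trange: "tnorm T \<Longrightarrow> x \<in> {0..1} \<Longrightarrow> y \<in> {0..1} \<Longrightarrow> T x y \<in> {0..1}"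
  unfolding tnorm_def by (elim conjE) (drule bspec, assumption, drule bspec, assumption, assumption)
lemma tunit: "tnorm T \<Longrightarrow> x \<in> {0..1} \<Longrightarrow> T x 1 = x"
  unfolding tnorm_def by (elim conjE) (drule bspec, assumption, assumption)
lemma tmono1: "tnorm T \<Longrightarrow> x \<in> {0..1} \<Longrightarrow> y \<in> {0..1} \<Longrightarrow> z \<in> {0..1} \<Longrightarrow> x \<le> y \<Longrightarrow> T x z \<le> T y z"
proof -
  assume a: "tnorm T" "x \<in> {0..1}" "y \<in> {0..1}" "z \<in> {0..1}" "x \<le> y"
  have "T z x \<le> T z y" by (rule tmono[OF a(1,4,2,3,5)])
  thus ?thesis using tcomm[OF a(1,2,4)] tcomm[OF a(1,3,4)] by simp
qed

lemma T0:
  assumes "tnorm T" "x \<in> {0..1}"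
  shows "T x 0 = 0"
proof -
  have "T x 0 = T 0 x" using tcomm[OF assms(1) assms(2), of 0] by simp
  also have "\<dots> \<le> T 0 1" using tmono[OF assms(1), of 0 x 1] assms(2) by simp
  also have "\<dots> = 0" using tunit[OF assms(1), of 0] by simp
  finally show ?thesis using trange[OF assms(1) assms(2), of 0] by simp
qed

lemma bddS: "bdd_above {\<beta>\<in>{0..1::real}. P \<beta>}"
  by (rule bdd_aboveI[of _ 1]) simp

lemma neg_range:
  assumes "tnorm T" "x \<in> {0..1}"
  shows "induced_negator T x \<in> {0..1}"
proof -
  let ?S = "{\<beta>\<in>{0..1}. T x \<beta> \<le> 0}"
  have "0 \<in> ?S" using T0[OF assms] by simp
  hence ne: "?S \<noteq> {}" by blast
  have "0 \<le> Sup ?S" by (rule cSup_upper[OF \<open>0 \<in> ?S\<close> bddS])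
  moreover have "Sup ?S \<le> 1" by (rule cSup_least[OF ne]) simp
  ultimately show ?thesis unfolding induced_negator_def residual_implicator_def by simp
qed

lemma le_neg:
  assumes "tnorm T" "a \<in> {0..1}" "c \<in> {0..1}" "T a c = 0"
  shows "a \<le> induced_negator T c"
proof -
  let ?S = "{\<beta>\<in>{0..1}. T c \<beta> \<le> 0}"
  have "T c a = 0" using assms tcomm[OF assms(1) assms(2) assms(3)] by simp
  hence "a \<in> ?S" using assms by auto
  hence "a \<le> Sup ?S" by (rule cSup_upper[OF _ bddS])
  thus ?thesis unfolding induced_negator_def residual_implicator_def by simp
qed

lemma T_neg:
  assumes "left_continuous_tnorm T" "x \<in> {0..1}"
  shows "T x (induced_negator T x) = 0"
proof -
  have tn: "tnorm T" using assms unfolding left_continuous_tnorm_def by auto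
  let ?S = "{\<beta>\<in>{0..1}. T x \<beta> \<le> 0}"
  let ?s = "Sup ?S"
  have s01: "?s \<in> {0..1}" using neg_range[OF tn assms(2)]
    unfolding induced_negator_def residual_implicator_def by auto
  have bdd: "bdd_above ?S" by (rule bddS)
  show ?thesis
  proof (cases "?s = 0")
    case True thus ?thesis using T0[OF tn assms(2)]
      unfolding induced_negator_def residual_implicator_def by simp
  next
    case False
    hence spos: "?s \<in> {0<..1}" using s01 by auto
    have lim: "((\<lambda>z. T z x) \<longlongrightarrow> T ?s x) (at_left ?s)"
      using assms spos unfolding left_continuous_tnorm_def by auto
    have ev: "eventually (\<lambda>z. T z x = 0) (at_left ?s)"
    proof -
      have "eventually (\<lambda>z. z \<in> {0<..<?s}) (at_left ?s)"
        using spos eventually_at_left_real[of 0 ?s] by auto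
      moreover have "T z x = 0" if z: "z \<in> {0<..<?s}" for z
      proof -
        have z01: "z \<in> {0..1}" using z s01 by auto
        have "0 \<in> ?S" using T0[OF tn assms(2)] by auto
        hence "?S \<noteq> {}" by blast
        have "z < ?s" using z by simp
        hence "\<exists>b\<in>?S. z < b" using less_cSup_iff[OF \<open>?S \<noteq> {}\<close> bdd, of z] by blast
        then obtain b where b: "b \<in> ?S" "z < b" by blast
        have "T x z \<le> T x b" using tmono[OF tn assms(2) z01, of b] b by auto
        moreover have "T x z \<ge> 0" using trange[OF tn assms(2) z01] by auto
        moreover have "T z x = T x z" using tcomm[OF tn z01 assms(2)] by auto
        ultimately show ?thesis using b by auto
      qed
      ultimately show ?thesis by (auto elim: eventually_mono)
    qed
    have "((\<lambda>z. T z x) \<longlongrightarrow> 0) (at_left ?s)"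
      using tendsto_eventually[OF ev] by simp
    hence "T ?s x = 0" using lim tendsto_unique[OF trivial_limit_at_left_real] by blast
    moreover have "T ?s x = T x ?s" using tcomm[OF tn s01 assms(2)] by auto
    ultimately show ?thesis unfolding induced_negator_def residual_implicator_def by simp
  qed
qed

theorem proposition4:
  fixes U :: "'a set" and T I :: "real \<Rightarrow> real \<Rightarrow> real" and N :: "real \<Rightarrow> real"
    and R :: "'a \<Rightarrow> 'a \<Rightarrow> real" and A :: "'a \<Rightarrow> real"
  assumes "finite U" and "U \<noteq> {}"
    and "IMTL_triplet T I N"
    and "T_preorder T U R"
    and "fuzzy_set_on U A"
  shows "granularly_representable T U R A \<longleftrightarrow>
    (\<forall>u\<in>U. \<forall>v\<in>U. T_disjoint T U (granule_plus T R (A u) u) (granule_minus T R (N (A v)) v))"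
proof -
  have lc: "left_continuous_tnorm T" and Ndef: "N = induced_negator T"
    and inv: "\<forall>x\<in>{0..1}. N (N x) = x"
    using assms(3) unfolding IMTL_triplet_def by auto
  have tn: "tnorm T" using lc unfolding left_continuous_tnorm_def by auto
  have R01: "\<And>u v. u \<in> U \<Longrightarrow> v \<in> U \<Longrightarrow> R u v \<in> {0..1}"
    using assms(4) unfolding T_preorder_def fuzzy_relation_on_def by auto
  have Rr: "\<And>u. u \<in> U \<Longrightarrow> R u u = 1" using assms(4) unfolding T_preorder_def by auto
  have Rt: "\<And>u v w. u \<in> U \<Longrightarrow> v \<in> U \<Longrightarrow> w \<in> U \<Longrightarrow> T (R u v) (R v w) \<le> R u w"
    using assms(4) unfolding T_preorder_def by auto
  have A01: "\<And>u. u \<in> U \<Longrightarrow> A u \<in> {0..1}" using assms(5) unfolding fuzzy_set_on_def by auto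
  have N01: "\<And>x. x \<in> {0..1} \<Longrightarrow> N x \<in> {0..1}" using neg_range[OF tn] Ndef by auto
  show ?thesis
  proof
    assume gr: "granularly_representable T U R A"
    show "\<forall>u\<in>U. \<forall>v\<in>U. T_disjoint T U (granule_plus T R (A u) u) (granule_minus T R (N (A v)) v)"
      unfolding T_disjoint_def granule_plus_def granule_minus_def
    proof (intro ballI)
      fix u v w assume u: "u \<in> U" and v: "v \<in> U" and w: "w \<in> U"
      let ?a = "R w u" and ?b = "A u" and ?c = "R v w" and ?d = "N (A v)"
      have a: "?a \<in> {0..1}" and b: "?b \<in> {0..1}" and c: "?c \<in> {0..1}" and d: "?d \<in> {0..1}"
        using R01 A01 N01 u v w by auto
      have ab: "T ?a ?b \<in> {0..1}" and cd: "T ?c ?d \<in> {0..1}" using trange[OF tn] a b c d by auto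
      have ca01: "T ?c ?a \<in> {0..1}" using trange[OF tn c a] .
      have "T (T ?a ?b) (T ?c ?d) = T (T ?c ?d) (T ?a ?b)" using tcomm[OF tn ab cd] .
      also have "\<dots> = T ?c (T ?d (T ?a ?b))" using tassoc[OF tn c d ab] .
      also have "T ?d (T ?a ?b) = T (T ?a ?b) ?d" using tcomm[OF tn d ab] .
      also have "T (T ?a ?b) ?d = T ?a (T ?b ?d)" using tassoc[OF tn a b d] .
      also have "T ?c (T ?a (T ?b ?d)) = T (T ?c ?a) (T ?b ?d)"
        using tassoc[OF tn c a trange[OF tn b d]] by simp
      also have "\<dots> = T (T (T ?c ?a) ?b) ?d"
        using tassoc[OF tn ca01 b d] by simp
      also have "\<dots> \<le> T (A v) ?d"
      proof -
        have ca: "T ?c ?a \<le> R v u" using Rt u v w by auto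
        have "T (T ?c ?a) ?b \<le> T (R v u) ?b"
          using tmono1[OF tn ca01 R01[OF v u] b ca] .
        also have "\<dots> \<le> A v" using gr u v unfolding granularly_representable_def by auto
        finally show ?thesis using tmono1[OF tn trange[OF tn ca01 b] A01[OF v] d] by simp
      qed
      also have "\<dots> = 0" using T_neg[OF lc A01[OF v]] Ndef by simp
      finally have le: "T (T ?a ?b) (T ?c ?d) \<le> 0" .
      have "T (T ?a ?b) (T ?c ?d) \<ge> 0" using trange[OF tn ab cd] by auto
      with le show "T (T ?a ?b) (T ?c ?d) = 0" by linarith
    qed
  next
    assume dj: "\<forall>u\<in>U. \<forall>v\<in>U. T_disjoint T U (granule_plus T R (A u) u) (granule_minus T R (N (A v)) v)"
    show "granularly_representable T U R A"
      unfolding granularly_representable_def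
    proof (intro ballI)
      fix u v assume u: "u \<in> U" and v: "v \<in> U"
      have "T (T (R v u) (A u)) (T (R v v) (N (A v))) = 0"
        using dj u v unfolding T_disjoint_def granule_plus_def granule_minus_def by auto
      moreover have "T (R v v) (N (A v)) = N (A v)"
        using Rr[OF v] tcomm[OF tn _ N01[OF A01[OF v]], of 1] tunit[OF tn N01[OF A01[OF v]]] by simp
      ultimately have z: "T (T (R v u) (A u)) (N (A v)) = 0" by simp
      have "T (R v u) (A u) \<in> {0..1}" using trange[OF tn R01[OF v u] A01[OF u]] .
      hence "T (R v u) (A u) \<le> induced_negator T (N (A v))"
        using le_neg[OF tn _ N01[OF A01[OF v]] z] by auto
      thus "T (R v u) (A u) \<le> A v" using Ndef inv A01[OF v] by auto
    qed
  qed
qed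

end
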